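(* The MPB rule $M$ does not satisfy any of the following: (a) discount monotonicity: for every instance $I$ and every $p\in W_M(I)$, if $I'$ is obtained from $I$ by reducing the cost of $p$ to $c(p)-1$, then $p\in W_M(I')$; (b) limit monotonicity: for every instance $I$ in which no project costs $b+1$, if $I'$ is obtained from $I$ by increasing the budget to $b+1$, then $W_M(I)\subseteq W_M(I')$; (c) strong exhaustiveness: for every instance $I$, every $S\in M(I)$ and every $p\in P\setminus S$, $c(S)+c(p)>b$. That is, for each of (a), (b), (c) there exists an instance on which the stated property fails.
   Context: A PB instance is $I=\langle N,P,c,b,\mathcal{A}\rangle$ with voters $N=\{1,\dots,n\}$, projects $P$, costs $c:P\to\mathbb{N}$, budget $b\in\mathbb{N}$, and approval sets $A_i\subseteq P$. $c(S)=\sum_{p\in S}c(p)$; $S$ is feasible if $c(S)\le b$; $u_i(S)=c(S\cap A_i)$. The MPB rule $M$ outputs $M(I)$, the set of all feasible $S$ maximizing $\min_{i\in N}u_i(S)$ among feasible sets. $W_M(I)=\{p\in P:\exists S\in M(I),\ p\in S\}$. *)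

theory Defs
  imports Main
begin

record 'p pb_inst =
  voters :: nat
  projects :: "'p set"
  cost :: "'p \<Rightarrow> nat"
  budget :: nat
  approvals :: "nat \<Rightarrow> 'p set"

definition valid_inst :: "'p pb_inst \<Rightarrow> bool" where
  "valid_inst I \<longleftrightarrow> voters I \<ge> 1 \<and> finite (projects I) \<and>
     (\<forall>i\<in>{1..voters I}. approvals I i \<subseteq> projects I)"

definition setcost :: "'p pb_inst \<Rightarrow> 'p set \<Rightarrow> nat" where
  "setcost I S = (\<Sum>p\<in>S. cost I p)"

definition feasible :: "'p pb_inst \<Rightarrow> 'p set \<Rightarrow> bool" where
  "feasible I S \<longleftrightarrow> S \<subseteq> projects I \<and> setcost I S \<le> budget I"

definition util :: "'p pb_inst \<Rightarrow> nat \<Rightarrow> 'p set \<Rightarrow> nat" where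
  "util I i S = setcost I (S \<inter> approvals I i)"

definition minutil :: "'p pb_inst \<Rightarrow> 'p set \<Rightarrow> nat" where
  "minutil I S = (MIN i\<in>{1..voters I}. util I i S)"

definition MPB :: "'p pb_inst \<Rightarrow> 'p set set" where
  "MPB I = {S. feasible I S \<and> (\<forall>T. feasible I T \<longrightarrow> minutil I T \<le> minutil I S)}"

definition winners :: "'p pb_inst \<Rightarrow> 'p set" where
  "winners I = {p\<in>projects I. \<exists>S\<in>MPB I. p \<in> S}"

end

theory Submission
  imports Defs
begin

lemma minutil1:
  assumes "voters I = 1" "approvals I 1 = projects I" "S \<subseteq> projects I"
  shows "minutil I S = setcost I S"
proof -
  have "S \<inter> approvals I 1 = S" using assms by auto
  then show ?thesis using assms by (simp add: minutil_def util_def)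
qed

theorem theorem7:
  shows "(\<exists>(I::nat pb_inst) p. valid_inst I \<and> p \<in> winners I \<and> cost I p \<ge> 1 \<and>
            p \<notin> winners (I\<lparr>cost := (cost I)(p := cost I p - 1)\<rparr>))
       \<and> (\<exists>I::nat pb_inst. valid_inst I \<and> (\<forall>q\<in>projects I. cost I q \<noteq> budget I + 1) \<and>
            \<not> winners I \<subseteq> winners (I\<lparr>budget := budget I + 1\<rparr>))
       \<and> (\<exists>(I::nat pb_inst) S p. valid_inst I \<and> S \<in> MPB I \<and> p \<in> projects I - S \<and>
            setcost I S + cost I p \<le> budget I)"
proof (intro conjI)
  let ?I = "\<lparr>voters = 1, projects = {0::nat,1}, cost = \<lambda>_. 2, budget = 2, approvals = \<lambda>_. {0,1}\<rparr>"
  let ?J = "?I\<lparr>cost := (cost ?I)(0 := cost ?I 0 - 1)\<rparr>"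
  have v: "valid_inst ?I" by (simp add: valid_inst_def)
  have w: "0 \<in> winners ?I"
  proof -
    have "{0} \<in> MPB ?I"
      unfolding MPB_def
    proof (intro CollectI conjI allI impI)
      show "feasible ?I {0}" by (simp add: feasible_def setcost_def)
      fix T assume "feasible ?I T"
      thus "minutil ?I T \<le> minutil ?I {0}"
        by (subst minutil1, auto simp: feasible_def)
           (subst minutil1, auto simp: setcost_def)
    qed
    thus ?thesis by (auto simp: winners_def)
  qed
  have nw: "0 \<notin> winners ?J"
  proof
    assume "0 \<in> winners ?J"
    then obtain S where S: "S \<in> MPB ?J" "0 \<in> S" by (auto simp: winners_def)
    have f1: "feasible ?J {1}" by (simp add: feasible_def setcost_def)
    have fS: "feasible ?J S" using S by (simp add: MPB_def)
    have "minutil ?J {1} \<le> minutil ?J S" using S f1 by (simp add: MPB_def)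
    moreover have "minutil ?J {1} = 2" by (subst minutil1, auto simp: setcost_def)
    moreover have "minutil ?J S = setcost ?J S" using fS by (subst minutil1, auto simp: feasible_def)
    ultimately have "setcost ?J S \<ge> 2" by simp
    moreover have "S \<subseteq> {0,1}" using fS by (simp add: feasible_def)
    ultimately show False using S
    proof (cases "1 \<in> S")
      case True
      hence "S = {0,1}" using S(2) \<open>S \<subseteq> {0,1}\<close> by auto
      thus False using fS by (simp add: feasible_def setcost_def)
    next
      case False
      hence "S = {0}" using S(2) \<open>S \<subseteq> {0,1}\<close> by auto
      thus False using \<open>setcost ?J S \<ge> 2\<close> by (simp add: setcost_def)
    qed
  qed
  show "\<exists>(I::nat pb_inst) p. valid_inst I \<and> p \<in> winners I \<and> cost I p \<ge> 1 \<and>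
            p \<notin> winners (I\<lparr>cost := (cost I)(p := cost I p - 1)\<rparr>)"
    using v w nw by (intro exI[of _ ?I] exI[of _ 0]) simp
next
  let ?I = "\<lparr>voters = 1, projects = {0::nat,1,2}, cost = (\<lambda>_. 2)(0 := 3), budget = 3, approvals = \<lambda>_. {0,1,2}\<rparr>"
  let ?J = "?I\<lparr>budget := budget ?I + 1\<rparr>"
  have v: "valid_inst ?I" by (simp add: valid_inst_def)
  have w: "0 \<in> winners ?I"
  proof -
    have "{0} \<in> MPB ?I"
      unfolding MPB_def
    proof (intro CollectI conjI allI impI)
      show "feasible ?I {0}" by (simp add: feasible_def setcost_def)
      fix T assume "feasible ?I T"
      thus "minutil ?I T \<le> minutil ?I {0}"
        by (subst minutil1, auto simp: feasible_def)
           (subst minutil1, auto simp: setcost_def)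
    qed
    thus ?thesis by (auto simp: winners_def)
  qed
  have nw: "0 \<notin> winners ?J"
  proof
    assume "0 \<in> winners ?J"
    then obtain S where S: "S \<in> MPB ?J" "0 \<in> S" by (auto simp: winners_def)
    have f1: "feasible ?J {1,2}" by (simp add: feasible_def setcost_def)
    have fS: "feasible ?J S" using S by (simp add: MPB_def)
    have "minutil ?J {1,2} \<le> minutil ?J S" using S f1 by (simp add: MPB_def)
    moreover have "minutil ?J {1,2} = 4" by (subst minutil1, auto simp: setcost_def)
    moreover have "minutil ?J S = setcost ?J S" using fS by (subst minutil1, auto simp: feasible_def)
    ultimately have "setcost ?J S \<ge> 4" by simp
    moreover have sub: "S \<subseteq> {0,1,2}" using fS by (simp add: feasible_def)
    ultimately show False
    proof (cases "S = {0}")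
      case True
      thus False using \<open>setcost ?J S \<ge> 4\<close> by (simp add: setcost_def)
    next
      case False
      then obtain x where x: "x \<in> S" "x \<noteq> 0" using S(2) by auto
      hence "{0,x} \<subseteq> S" "x \<in> {1,2}" using S(2) sub by auto
      hence "setcost ?J {0,x} \<le> setcost ?J S" unfolding setcost_def
        by (intro sum_mono2) (auto intro: finite_subset[OF sub])
      moreover have "setcost ?J {0,x} = 5" using x \<open>x \<in> {1,2}\<close> by (auto simp: setcost_def)
      ultimately show False using fS by (simp add: feasible_def)
    qed
  qed
  show "\<exists>I::nat pb_inst. valid_inst I \<and> (\<forall>q\<in>projects I. cost I q \<noteq> budget I + 1) \<and>
            \<not> winners I \<subseteq> winners (I\<lparr>budget := budget I + 1\<rparr>)"
    using v w nw by (intro exI[of _ ?I]) auto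
next
  let ?I = "\<lparr>voters = 1, projects = {0::nat}, cost = \<lambda>_. 0, budget = 0, approvals = \<lambda>_. {}\<rparr>"
  have "{} \<in> MPB ?I"
    by (auto simp: MPB_def feasible_def setcost_def minutil_def util_def)
  thus "\<exists>(I::nat pb_inst) S p. valid_inst I \<and> S \<in> MPB I \<and> p \<in> projects I - S \<and>
            setcost I S + cost I p \<le> budget I"
    by (intro exI[of _ ?I] exI[of _ "{}"] exI[of _ 0]) (auto simp: valid_inst_def setcost_def)
qed

end
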